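(* Let $d\ge2$, $m,c>0$ and $p,p_*\in\mathbb{R}^d$ with $p\neq p_*$. Then \[ \tilde\Lambda\,\Pi_{\hat k^\perp}\,\tilde\Lambda=\frac{\big((p^\mu\cdot p_{*\mu})^2-(mc)^4\big)I_d-(mc)^2\,(p\otimes p+p_*\otimes p_* )+(p^\mu\cdot p_{*\mu})\,(p\otimes p_*+p_*\otimes p)}{(p^\mu\cdot p_{*\mu})^2-(mc)^4}, \] where $p^\mu\cdot p_{*\mu}=p_0p_{0*}-p\cdot p_*$.
   Context: $p_0=\sqrt{(mc)^2+|p|^2}$, $p_{0*}=\sqrt{(mc)^2+|p_*|^2}$, $p^\mu=(p_0,p)$, $p_*^\mu=(p_{0*},p_* )$. Define $s=(p_0+p_{0*})^2-|p+p_*|^2$, $v=\frac{p+p_*}{p_0+p_{0*}}$, $\rho=\frac{p_0+p_{0*}}{\sqrt s}$, the symmetric matrix $\tilde\Lambda=I_d+(\rho-1)\frac{v\otimes v}{|v|^2}$ ($=I_d$ if $v=0$), and the Lorentz transformation $\Lambda=\begin{pmatrix}\rho&-\rho v^T\\-\rho v&\tilde\Lambda\end{pmatrix}$. Let $\tilde p,\tilde p_*$ be the spatial parts of $\Lambda p^\mu$, $\Lambda p_*^\mu$, $\hat k=\frac{\tilde p-\tilde p_*}{|\tilde p-\tilde p_*|}$, and $\Pi_{\hat k^\perp}=I_d-\hat k\otimes\hat k$. *)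

theory Defs
  imports "HOL-Analysis.Analysis"
begin

definition outer :: "real^'d \<Rightarrow> real^'d \<Rightarrow> real^'d^'d" where
  "outer a b = (\<chi> i j. a $ i * b $ j)"

definition energy :: "real \<Rightarrow> real \<Rightarrow> real^'d \<Rightarrow> real" where
  "energy m c p = sqrt ((m*c)^2 + (norm p)^2)"

definition mandelstam_s :: "real \<Rightarrow> real \<Rightarrow> real^'d \<Rightarrow> real^'d \<Rightarrow> real" where
  "mandelstam_s m c p q = (energy m c p + energy m c q)^2 - (norm (p + q))^2"

definition vel :: "real \<Rightarrow> real \<Rightarrow> real^'d \<Rightarrow> real^'d \<Rightarrow> real^'d" where
  "vel m c p q = inverse (energy m c p + energy m c q) *\<^sub>R (p + q)"

definition rho :: "real \<Rightarrow> real \<Rightarrow> real^'d \<Rightarrow> real^'d \<Rightarrow> real" where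
  "rho m c p q = (energy m c p + energy m c q) / sqrt (mandelstam_s m c p q)"

definition Lambda_tilde :: "real \<Rightarrow> real \<Rightarrow> real^'d \<Rightarrow> real^'d \<Rightarrow> real^'d^'d" where
  "Lambda_tilde m c p q =
     (let v = vel m c p q in
      if v = 0 then mat 1
      else mat 1 + ((rho m c p q - 1) / (norm v)^2) *\<^sub>R outer v v)"

text \<open>Spatial part of \<Lambda> applied to the four-vector (energy m c x, x), where
  \<Lambda> = [[\<rho>, -\<rho> v^T], [-\<rho> v, \<Lambda>~]] is the boost built from p, q.\<close>
definition boost_spatial :: "real \<Rightarrow> real \<Rightarrow> real^'d \<Rightarrow> real^'d \<Rightarrow> real^'d \<Rightarrow> real^'d" where
  "boost_spatial m c p q x =
     (- (rho m c p q * energy m c x)) *\<^sub>R vel m c p q + Lambda_tilde m c p q *v x"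

definition khat :: "real \<Rightarrow> real \<Rightarrow> real^'d \<Rightarrow> real^'d \<Rightarrow> real^'d" where
  "khat m c p q =
     (let pt = boost_spatial m c p q p; qt = boost_spatial m c p q q
      in inverse (norm (pt - qt)) *\<^sub>R (pt - qt))"

definition Pi_perp :: "real^'d \<Rightarrow> real^'d^'d" where
  "Pi_perp k = mat 1 - outer k k"

definition minkowski_dot :: "real \<Rightarrow> real \<Rightarrow> real^'d \<Rightarrow> real^'d \<Rightarrow> real" where
  "minkowski_dot m c p q = energy m c p * energy m c q - p \<bullet> q"

end

theory Submission
  imports Defs
begin

lemma outer_mv: "outer a b *v x = (b \<bullet> x) *\<^sub>R (a::real^'d)"
  by (simp add: vec_eq_iff outer_def matrix_vector_mult_def inner_vec_def sum_distrib_left mult.commute mult.left_commute)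

lemma Pi_mv: "Pi_perp k *v y = y - (k \<bullet> y) *\<^sub>R k"
  by (simp add: Pi_perp_def matrix_vector_mult_diff_rdistrib outer_mv)

lemma energy_sq: "(energy m c p)^2 = (m*c)^2 + p \<bullet> p"
  by (simp add: energy_def power2_norm_eq_inner)

lemma energy_gt: "m*c \<noteq> 0 \<Longrightarrow> energy m c p > norm p"
proof -
  assume "m*c \<noteq> 0"
  then have "(norm p)^2 < (m*c)^2 + (norm p)^2" by simp
  then have "sqrt ((norm p)^2) < sqrt ((m*c)^2 + (norm p)^2)" using real_sqrt_less_iff by blast
  then show ?thesis by (simp add: energy_def)
qed

lemma Lt_mv:
  fixes m c :: real and p q :: "real^'d"
  defines "v \<equiv> vel m c p q"
  defines "\<alpha> \<equiv> (if v = 0 then 0 else (rho m c p q - 1) / (norm v)^2)"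
  shows "Lambda_tilde m c p q *v x = x + (\<alpha> * (v \<bullet> x)) *\<^sub>R v"
proof (cases "v = 0")
  case True
  then show ?thesis by (simp add: Lambda_tilde_def v_def[symmetric] \<alpha>_def)
next
  case False
  then show ?thesis
    by (simp add: Lambda_tilde_def v_def[symmetric] \<alpha>_def matrix_vector_mult_add_rdistrib
        scaleR_matrix_vector_assoc[symmetric] outer_mv)
qed

lemma final_scalar:
  fixes M g s kk xi pi qi px qx :: real
  assumes "s = 2*M + 2*g" "kk = 2*(g - M)" "g > M" "M > 0"
  shows "xi + ((px+qx)/s) * (pi+qi) - ((px-qx)/kk) * (pi-qi)
    = inverse (g^2 - M^2) * ((g^2 - M^2) * xi - M * (px * pi + qx * qi) + g * (qx * pi + px * qi))"
proof -
  have d: "g^2 - M^2 = (g-M)*(g+M)" by algebra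
  have gm: "g - M > 0" "g + M > 0" using assms by auto
  then have D: "g^2 - M^2 \<noteq> 0" using d by simp
  have e1: "(g^2 - M^2) / s = (g - M)/2" using assms(1) gm d by (simp add: field_simps)
  have e2: "(g^2 - M^2) / kk = (g + M)/2" unfolding assms(2) d using gm by (simp add: field_simps)
  have "(g^2 - M^2) * (xi + ((px+qx)/s) * (pi+qi) - ((px-qx)/kk) * (pi-qi))
      = (g^2 - M^2) * xi + ((g^2 - M^2) / s) * ((px+qx) * (pi+qi)) - ((g^2 - M^2) / kk) * ((px-qx) * (pi-qi))"
    by (simp add: divide_inverse algebra_simps)
  also have "\<dots> = (g^2 - M^2) * xi - M * (px * pi + qx * qi) + g * (qx * pi + px * qi)"
    unfolding e1 e2 by (simp add: field_simps)
  finally show ?thesis using D by (simp add: field_simps)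
qed

lemma final_id:
  fixes p q x :: "real^'d" and M g s kk :: real
  assumes "s = 2*M + 2*g" "kk = 2*(g - M)" "g > M" "M > 0"
  shows "x + (((p+q)\<bullet>x)/s) *\<^sub>R (p+q) - (((p-q)\<bullet>x)/kk) *\<^sub>R (p-q)
    = inverse (g^2 - M^2) *\<^sub>R ((g^2 - M^2) *\<^sub>R x - M *\<^sub>R ((p\<bullet>x) *\<^sub>R p + (q\<bullet>x) *\<^sub>R q)
       + g *\<^sub>R ((q\<bullet>x) *\<^sub>R p + (p\<bullet>x) *\<^sub>R q))"
  unfolding vec_eq_iff
  using final_scalar[OF assms, of "x$_" "(p\<bullet>x)" "(q\<bullet>x)" "p$_" "q$_"]
  by (simp add: inner_add_left inner_diff_left)

theorem propositionA4:
  fixes m c :: real and p q :: "real^'d"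
  assumes "CARD('d) \<ge> 2" and "m > 0" and "c > 0" and "p \<noteq> q"
  shows "Lambda_tilde m c p q ** Pi_perp (khat m c p q) ** Lambda_tilde m c p q
    = inverse ((minkowski_dot m c p q)^2 - (m*c)^4) *\<^sub>R
        ( ((minkowski_dot m c p q)^2 - (m*c)^4) *\<^sub>R mat 1
          - (m*c)^2 *\<^sub>R (outer p p + outer q q)
          + minkowski_dot m c p q *\<^sub>R (outer p q + outer q p))"
proof -
  define M where "M = (m*c)^2"
  define a where "a = energy m c p"
  define b where "b = energy m c q"
  define E where "E = a + b"
  define P where "P = p + q"
  define s where "s = mandelstam_s m c p q"
  define v where "v = vel m c p q"
  define \<rho> where "\<rho> = rho m c p q"
  define g where "g = minkowski_dot m c p q"
  define u where "u = p - q"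
  define \<delta> where "\<delta> = a - b"
  define L where "L = Lambda_tilde m c p q"
  define \<alpha> where "\<alpha> = (if v = 0 then 0 else (\<rho> - 1) / (norm v)^2)"
  have mc: "m*c \<noteq> 0" using assms by simp
  have M0: "M > 0" unfolding M_def using mc by simp
  have M4: "(m*c)^4 = M^2" unfolding M_def by simp
  have a2: "a^2 = M + p \<bullet> p" unfolding a_def M_def by (rule energy_sq)
  have b2: "b^2 = M + q \<bullet> q" unfolding b_def M_def by (rule energy_sq)
  have ap: "a > norm p" unfolding a_def using energy_gt[OF mc] .
  have bq: "b > norm q" unfolding b_def using energy_gt[OF mc] .
  have E0: "E > 0" unfolding E_def using ap bq norm_ge_zero[of p] norm_ge_zero[of q] by linarith
  have g_def': "g = a*b - p \<bullet> q" unfolding g_def a_def b_def minkowski_dot_def by simp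
  have s_eq: "s = 2*M + 2*g"
  proof -
    have "s = E^2 - P \<bullet> P" unfolding s_def mandelstam_s_def E_def a_def b_def P_def
      by (simp add: power2_norm_eq_inner)
    also have "\<dots> = a^2 + b^2 + 2*a*b - (p\<bullet>p + 2 * (p\<bullet>q) + q\<bullet>q)"
      unfolding E_def P_def by (simp add: inner_add_left inner_add_right inner_commute power2_eq_square algebra_simps)
    finally show ?thesis using a2 b2 g_def' by simp
  qed
  have uu: "u \<bullet> u - \<delta>^2 = 2*(g - M)"
  proof -
    have "u \<bullet> u = p\<bullet>p - 2*(p\<bullet>q) + q\<bullet>q" unfolding u_def
      by (simp add: inner_diff_left inner_diff_right inner_commute)
    moreover have "\<delta>^2 = a^2 + b^2 - 2*a*b" unfolding \<delta>_def by (simp add: power2_eq_square algebra_simps)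
    ultimately show ?thesis using a2 b2 g_def' by simp
  qed
  have gM: "g > M"
  proof -
    have u0: "u \<bullet> u > 0" using assms(4) unfolding u_def by simp
    have dE: "\<delta> * E = p\<bullet>p - q\<bullet>q" unfolding \<delta>_def E_def using a2 b2
      by (simp add: power2_eq_square algebra_simps)
    have "p\<bullet>p - q\<bullet>q = (norm p - norm q) * (norm p + norm q)"
      by (simp add: power2_norm_eq_inner[symmetric] power2_eq_square algebra_simps)
    then have "(\<delta> * E)^2 = (norm p - norm q)^2 * (norm p + norm q)^2" using dE by (simp add: power_mult_distrib)
    also have "\<dots> \<le> (u \<bullet> u) * (norm p + norm q)^2"
    proof (rule mult_right_mono)
      have "\<bar>norm p - norm q\<bar> \<le> norm u" unfolding u_def by (rule norm_triangle_ineq3)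
      then have "\<bar>norm p - norm q\<bar>^2 \<le> (norm u)^2" by (rule power_mono) simp
      then show "(norm p - norm q)^2 \<le> u \<bullet> u" by (simp add: power2_norm_eq_inner)
    qed simp
    also have "\<dots> < (u \<bullet> u) * E^2"
    proof (rule mult_strict_left_mono[OF _ u0])
      have "0 \<le> norm p + norm q" by simp
      moreover have "norm p + norm q < E" unfolding E_def using ap bq by linarith
      ultimately show "(norm p + norm q)^2 < E^2" by (simp add: power_strict_mono)
    qed
    finally have "\<delta>^2 * E^2 < (u \<bullet> u) * E^2" by (simp add: power_mult_distrib)
    then have "\<delta>^2 < u \<bullet> u" using E0 by simp
    then show ?thesis using uu by simp
  qed
  have s0: "s > 0" using s_eq gM M0 by simp
  have rho2: "\<rho>^2 = E^2 / s" unfolding \<rho>_def rho_def E_def a_def b_def s_def[symmetric]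
    using s0 by (simp add: power_divide)
  have vP: "v = (1/E) *\<^sub>R P" unfolding v_def vel_def E_def a_def b_def P_def by (simp add: divide_inverse)
  have sE: "s = E^2 - P \<bullet> P" unfolding s_def mandelstam_s_def E_def a_def b_def P_def
      by (simp add: power2_norm_eq_inner)
  have vv: "v \<bullet> v = (P \<bullet> P) / E^2" unfolding vP by (simp add: power2_eq_square)
  have Lmv: "\<And>x. L *v x = x + (\<alpha> * (v \<bullet> x)) *\<^sub>R v"
    unfolding L_def \<alpha>_def v_def \<rho>_def by (rule Lt_mv)
  have av: "v \<noteq> 0 \<Longrightarrow> \<alpha> * (v \<bullet> v) = \<rho> - 1"
    unfolding \<alpha>_def by (simp add: power2_norm_eq_inner)
  have Lv: "L *v v = \<rho> *\<^sub>R v"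
  proof (cases "v = 0")
    case True then show ?thesis by (simp add: Lmv)
  next
    case False
    have "L *v v = (1 + \<alpha> * (v \<bullet> v)) *\<^sub>R v" by (simp add: Lmv scaleR_add_left)
    then show ?thesis using av[OF False] by simp
  qed
  have LL: "\<And>x. L *v (L *v x) = x + ((P \<bullet> x) / s) *\<^sub>R P"
  proof -
    fix x
    show "L *v (L *v x) = x + ((P \<bullet> x) / s) *\<^sub>R P"
    proof (cases "v = 0")
      case True
      then have "P = 0" unfolding vP using E0 by simp
      then show ?thesis using True by (simp add: Lmv)
    next
      case False
      have vL: "v \<bullet> (L *v x) = (v \<bullet> x) * (1 + \<alpha> * (v \<bullet> v))"
        by (simp add: Lmv inner_add_right algebra_simps)
      have "L *v (L *v x) = (L *v x) + (\<alpha> * (v \<bullet> (L *v x))) *\<^sub>R v" by (rule Lmv)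
      also have "\<dots> = x + (\<alpha> * (v \<bullet> x) + \<alpha> * ((v \<bullet> x) * (1 + \<alpha> * (v \<bullet> v)))) *\<^sub>R v"
        unfolding vL by (simp add: Lmv scaleR_add_left)
      also have "\<alpha> * (v \<bullet> x) + \<alpha> * ((v \<bullet> x) * (1 + \<alpha> * (v \<bullet> v))) = \<alpha> * (v \<bullet> x) * (2 + \<alpha> * (v \<bullet> v))"
        by (simp add: algebra_simps)
      also have "\<alpha> * (v \<bullet> x) * (2 + \<alpha> * (v \<bullet> v)) = (v \<bullet> x) * (E^2 / s)"
      proof -
        have vv0: "v \<bullet> v \<noteq> 0" using False by simp
        have "\<alpha> = (\<rho> - 1) / (v \<bullet> v)" using av[OF False] vv0 by (simp add: field_simps)
        have "\<alpha> * (2 + \<alpha> * (v \<bullet> v)) = \<alpha> * (\<rho> + 1)" using av[OF False] by simp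
        also have "\<dots> = (\<rho>^2 - 1) / (v \<bullet> v)"
          using vv0 by (simp only: \<open>\<alpha> = (\<rho> - 1) / (v \<bullet> v)\<close>) (simp add: field_simps power2_eq_square)
        also have "\<dots> = E^2 / s"
        proof -
          have PP: "P \<bullet> P \<noteq> 0" using vv0 vv by auto
          have s1: "E^2 - P \<bullet> P \<noteq> 0" using s0 sE by simp
          show ?thesis unfolding rho2 vv sE using PP s1 E0 by (simp add: field_simps)
        qed
        finally have h: "\<alpha> * (2 + \<alpha> * (v \<bullet> v)) = E^2 / s" .
        have "\<alpha> * (v \<bullet> x) * (2 + \<alpha> * (v \<bullet> v)) = (v \<bullet> x) * (\<alpha> * (2 + \<alpha> * (v \<bullet> v)))"
          by (simp only: ac_simps)
        then show ?thesis by (simp only: h)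
      qed
      also have "x + ((v \<bullet> x) * (E^2 / s)) *\<^sub>R v = x + ((P \<bullet> x) / s) *\<^sub>R P"
        unfolding vP using E0 by (simp add: power2_eq_square field_simps)
      finally show ?thesis .
    qed
  qed
  have Lsym: "\<And>x y. (L *v x) \<bullet> y = x \<bullet> (L *v y)"
    by (simp add: Lmv inner_add_left inner_add_right inner_commute)
  define K where "K = boost_spatial m c p q p - boost_spatial m c p q q"
  have K_eq: "K = L *v u - (\<rho> * \<delta>) *\<^sub>R v"
    unfolding K_def boost_spatial_def L_def[symmetric] \<rho>_def[symmetric] v_def[symmetric]
      a_def[symmetric] b_def[symmetric] u_def \<delta>_def
    by (simp add: matrix_vector_mult_diff_distrib algebra_simps)
  have Pu: "P \<bullet> u = E * \<delta>" unfolding P_def u_def E_def \<delta>_def using a2 b2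
    by (simp add: inner_add_left inner_diff_right inner_commute power2_eq_square algebra_simps)
  have vu: "v \<bullet> u = \<delta>" unfolding vP using Pu E0 by simp
  have LK: "L *v K = u"
  proof -
    have "L *v K = L *v (L *v u) - (\<rho> * \<delta>) *\<^sub>R (L *v v)"
      unfolding K_eq by (simp add: matrix_vector_mult_diff_distrib matrix_vector_mult_scaleR)
    also have "\<dots> = u + (E * \<delta> / s) *\<^sub>R P - (\<rho>^2 * \<delta>) *\<^sub>R v"
      by (simp add: LL Lv Pu power2_eq_square)
    also have "(\<rho>^2 * \<delta>) *\<^sub>R v = (E * \<delta> / s) *\<^sub>R P"
      unfolding rho2 vP using E0 by (simp add: power2_eq_square)
    finally show ?thesis by simp
  qed
  have KK: "K \<bullet> K = 2*(g - M)"
  proof -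
    have "K \<bullet> K = (L *v u) \<bullet> (L *v u) - 2 * (\<rho> * \<delta>) * ((L *v u) \<bullet> v) + (\<rho> * \<delta>)^2 * (v \<bullet> v)"
      unfolding K_eq by (simp add: inner_diff_left inner_diff_right inner_commute power2_eq_square algebra_simps)
    also have "(L *v u) \<bullet> (L *v u) = u \<bullet> u + (E*\<delta>)^2 / s"
      by (simp add: Lsym LL inner_add_right Pu inner_commute power2_eq_square)
    also have "(L *v u) \<bullet> v = \<rho> * \<delta>"
    proof -
      have "u \<bullet> v = \<delta>" using vu by (simp add: inner_commute)
      then show ?thesis by (simp only: Lsym Lv inner_scaleR_right)
    qed
    finally have "K \<bullet> K = u \<bullet> u + (E*\<delta>)^2 / s - 2 * \<rho>^2 * \<delta>^2 + \<rho>^2 * \<delta>^2 * (v \<bullet> v)"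
      by (simp add: power2_eq_square)
    also have "\<dots> = u \<bullet> u - \<delta>^2"
    proof -
      have s1: "E^2 - P \<bullet> P \<noteq> 0" using s0 sE by simp
      have t1: "(E^2/s)*\<delta>^2*((P\<bullet>P)/E^2) = \<delta>^2*(P\<bullet>P)/s" using E0 by (simp add: field_simps)
      have t2: "(E*\<delta>)^2 / s = E^2*\<delta>^2/s" by (simp add: power_mult_distrib)
      have "u \<bullet> u + (E*\<delta>)^2 / s - 2 * (E^2/s) * \<delta>^2 + (E^2/s) * \<delta>^2 * ((P\<bullet>P)/E^2)
          = u \<bullet> u + \<delta>^2 * ((P\<bullet>P) - E^2) / s"
        unfolding t1 t2 using s0 by (simp add: field_simps)
      also have "(P\<bullet>P) - E^2 = - s" using sE by simp
      finally show ?thesis unfolding rho2 vv using s0 by simp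
    qed
    finally show ?thesis using uu by simp
  qed
  have Kn: "K \<noteq> 0" using KK gM by auto
  have kh: "khat m c p q = inverse (norm K) *\<^sub>R K"
    unfolding khat_def K_def Let_def by simp
  have nK2: "(norm K)^2 = 2*(g - M)" using KK by (simp add: power2_norm_eq_inner)
  have main: "L ** Pi_perp (khat m c p q) ** L = inverse (g^2 - M^2) *\<^sub>R ( (g^2 - M^2) *\<^sub>R mat 1
          - M *\<^sub>R (outer p p + outer q q) + g *\<^sub>R (outer p q + outer q p))"
    unfolding matrix_eq
  proof
    fix x
    have ck: "inverse (norm K) * (u \<bullet> x) * inverse (norm K) = u \<bullet> x / (2 * g - 2 * M)"
    proof -
      have "2*g - 2*M = norm K * norm K" using nK2 by (simp add: power2_eq_square)
      then show ?thesis by (simp add: divide_inverse)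
    qed
    have ck: "inverse (norm K) * (u \<bullet> x) * inverse (norm K) = u \<bullet> x / (2 * g - 2 * M)"
    proof -
      have "2*g - 2*M = norm K * norm K" using nK2 by (simp add: power2_eq_square)
      then show ?thesis by (simp add: divide_inverse)
    qed
    have "(L ** Pi_perp (khat m c p q) ** L) *v x
        = L *v (L *v x) - ((khat m c p q) \<bullet> (L *v x)) *\<^sub>R (L *v khat m c p q)"
      by (simp add: matrix_vector_mul_assoc[symmetric] Pi_mv matrix_vector_mult_diff_distrib
          matrix_vector_mult_scaleR)
    also have "\<dots> = x + ((P \<bullet> x) / s) *\<^sub>R P - ((u \<bullet> x) / (2*(g - M))) *\<^sub>R u"
      unfolding kh
      by (simp add: LL matrix_vector_mult_scaleR LK Lsym[symmetric] ck)
    also have "\<dots> = inverse (g^2 - M^2) *\<^sub>R ((g^2 - M^2) *\<^sub>R x - M *\<^sub>R ((p\<bullet>x) *\<^sub>R p + (q\<bullet>x) *\<^sub>R q)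
       + g *\<^sub>R ((q\<bullet>x) *\<^sub>R p + (p\<bullet>x) *\<^sub>R q))"
      unfolding P_def u_def by (rule final_id[OF s_eq refl gM M0])
    also have "\<dots> = (inverse (g^2 - M^2) *\<^sub>R ( (g^2 - M^2) *\<^sub>R mat 1
          - M *\<^sub>R (outer p p + outer q q) + g *\<^sub>R (outer p q + outer q p))) *v x"
      by (simp add: scaleR_matrix_vector_assoc[symmetric] matrix_vector_mult_add_rdistrib
          matrix_vector_mult_diff_rdistrib outer_mv)
    finally show "(L ** Pi_perp (khat m c p q) ** L) *v x = (inverse (g^2 - M^2) *\<^sub>R ( (g^2 - M^2) *\<^sub>R mat 1
          - M *\<^sub>R (outer p p + outer q q) + g *\<^sub>R (outer p q + outer q p))) *v x" .
  qed
  show ?thesis unfolding L_def[symmetric] g_def[symmetric] M4 M_def[symmetric] using main .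
qed

end
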